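(* Let $x=\prod_{n\ge1}01^n=0\,1\,0\,11\,0\,111\,0\,1111\cdots\in\{0,1\}^\omega$, and define $\varphi:\{0,1\}^+\to\{0,1\}$ by $\varphi(u)=0$ if $u\in\mathrm{Fact}(x)$ and $\varphi(u)=1$ otherwise. Then no suffix of $x$ admits a $\varphi$-ultra monochromatic factorization.
   Context: $\mathrm{Fact}(x)$ is the set of non-empty finite factors of $x$. A factorization $x'=V_0V_1V_2\cdots$ with all $V_i$ non-empty is $\varphi$-ultra monochromatic if there is a color $c$ such that for all $k\ge1$, all $0\le n_1<\cdots<n_k$ and all permutations $\sigma$ of $\{1,\dots,k\}$, $\varphi(V_{n_{\sigma(1)}}\cdots V_{n_{\sigma(k)}})=c$. *)

theory Defs
  imports "HOL-Combinatorics.Permutations"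
begin

text \<open>Infinite binary words are functions nat => bool (False = 0, True = 1);
finite words are lists.\<close>

text \<open>Block n (n >= 1) of x is 0 1^n, of length n+1, starting at position
(n-1)(n+2)/2. Hence x i = 0 exactly at these block starts.\<close>
definition xword :: "nat \<Rightarrow> bool" where
  "xword i = (\<not> (\<exists>n\<ge>1. i = (n - 1) * (n + 2) div 2))"

definition prefix_word :: "(nat \<Rightarrow> bool) \<Rightarrow> nat \<Rightarrow> bool list" where
  "prefix_word w l = map w [0..<l]"

definition Fact :: "(nat \<Rightarrow> bool) \<Rightarrow> bool list set" where
  "Fact w = {u. u \<noteq> [] \<and> (\<exists>i. u = map (\<lambda>j. w (i + j)) [0..<length u])}"

definition phi :: "bool list \<Rightarrow> bool" where
  "phi u = (u \<notin> Fact xword)"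

definition suffix_from :: "(nat \<Rightarrow> bool) \<Rightarrow> nat \<Rightarrow> nat \<Rightarrow> bool" where
  "suffix_from w m = (\<lambda>k. w (m + k))"

definition is_factorization :: "(nat \<Rightarrow> bool) \<Rightarrow> (nat \<Rightarrow> bool list) \<Rightarrow> bool" where
  "is_factorization w V \<longleftrightarrow>
     (\<forall>n. V n \<noteq> []) \<and>
     (\<forall>n j. j < length (V n) \<longrightarrow> w ((\<Sum>i<n. length (V i)) + j) = V n ! j)"

definition ultra_mono :: "(bool list \<Rightarrow> 'c) \<Rightarrow> (nat \<Rightarrow> bool list) \<Rightarrow> bool" where
  "ultra_mono f V \<longleftrightarrow> (\<exists>c. \<forall>k (ns :: nat \<Rightarrow> nat) \<sigma>.
      k \<ge> 1 \<longrightarrow> (\<forall>i j. i < j \<longrightarrow> j < k \<longrightarrow> ns i < ns j) \<longrightarrow> \<sigma> permutes {..<k} \<longrightarrow>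
      f (concat (map (\<lambda>i. V (ns (\<sigma> i))) [0..<k])) = c)"

end

theory Submission
  imports Defs
begin

fun zz :: "nat \<Rightarrow> nat" where
  "zz 0 = 0" | "zz (Suc k) = zz k + k + 2"

lemma zz_eq: "2 * zz k = k * (k + 3)"
  by (induction k) (auto simp: algebra_simps)

lemma zz_ge: "k \<le> zz k"
  by (induction k) auto

lemma zz_smono: "strict_mono zz"
  by (rule strict_mono_Suc_iff[THEN iffD2]) auto

lemma notx: "(\<not> xword i) \<longleftrightarrow> (\<exists>k. i = zz k)"
proof
  assume "\<not> xword i"
  then obtain n where n: "n \<ge> 1" "i = (n - 1) * (n + 2) div 2" unfolding xword_def by auto
  then obtain k where "n = Suc k" by (cases n) auto
  with n have "i = k * (k + 3) div 2" by (simp add: algebra_simps)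
  with zz_eq[of k] have "i = zz k" by simp
  then show "\<exists>k. i = zz k" by blast
next
  assume "\<exists>k. i = zz k"
  then obtain k where k: "i = zz k" by blast
  have "i = (Suc k - 1) * (Suc k + 2) div 2" using zz_eq[of k] k by (simp add: algebra_simps)
  then show "\<not> xword i" unfolding xword_def by (intro notI) (metis le_add1 plus_1_eq_Suc)
qed

lemma K1:
  assumes "\<not> xword (p + a + 1)" "\<forall>t. 0 < t \<and> t \<le> a \<longrightarrow> xword (p + t)" "p = zz k"
  shows "a = Suc k"
proof -
  obtain k2 where k2: "p + a + 1 = zz k2" using assms(1) notx by blast
  have "zz k < zz k2" using k2 assms(3) by simp
  then have lt: "k < k2" using zz_smono strict_mono_less by blast
  show ?thesis
  proof (cases "k2 = Suc k")
    case True then show ?thesis using k2 assms(3) by simp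
  next
    case False
    then have "Suc k < k2" using lt by simp
    then have "zz (Suc k) < zz k2" using zz_smono strict_mono_less by blast
    moreover have "zz k < zz (Suc k)" by simp
    ultimately have "0 < zz (Suc k) - p \<and> zz (Suc k) - p \<le> a" using k2 assms(3) by simp
    then have "xword (p + (zz (Suc k) - p))" using assms(2) by blast
    moreover have "p + (zz (Suc k) - p) = zz (Suc k)" using assms(3) by simp
    ultimately show ?thesis using notx by metis
  qed
qed

lemma K:
  assumes "\<not> xword p" "\<not> xword (p + a + 1)" "\<forall>t. 0 < t \<and> t \<le> a \<longrightarrow> xword (p + t)"
    "\<not> xword p'" "\<not> xword (p' + a' + 1)" "\<forall>t. 0 < t \<and> t \<le> a' \<longrightarrow> xword (p' + t)"
    "p < p'"
  shows "a < a'"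
proof -
  obtain k where k: "p = zz k" using assms(1) notx by blast
  obtain k' where k': "p' = zz k'" using assms(4) notx by blast
  have "a = Suc k" using K1 assms(2,3) k by blast
  moreover have "a' = Suc k'" using K1 assms(5,6) k' by blast
  moreover have "k < k'" using k k' assms(7) zz_smono strict_mono_less by blast
  ultimately show ?thesis by simp
qed

lemma H:
  assumes nth: "\<And>t. t < length u \<Longrightarrow> xword (i + t) = u ! t"
    and d: "u = P @ [False] @ replicate a True @ [False] @ Q"
  shows "\<not> xword (i + length P) \<and> \<not> xword (i + length P + a + 1) \<and>
    (\<forall>t. 0 < t \<and> t \<le> a \<longrightarrow> xword (i + length P + t))"
proof -
  have L: "length u = length P + a + 2 + length Q" using d by simp
  have e1: "u ! length P = False" unfolding d by simp
  have e2: "u ! (length P + (a + 1)) = False" unfolding d by (simp add: nth_append)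
  have a1: "\<not> xword (i + length P)"
    using nth[of "length P"] L e1 by simp
  have a2: "\<not> xword (i + length P + a + 1)"
    using nth[of "length P + (a + 1)"] L e2 by (simp add: add.assoc)
  have a3: "\<forall>t. 0 < t \<and> t \<le> a \<longrightarrow> xword (i + length P + t)"
  proof (intro allI impI)
    fix t assume t: "0 < t \<and> t \<le> a"
    then obtain s where s: "t = Suc s" by (cases t) auto
    have "length P + t < length u" using L t by simp
    then have 1: "xword (i + (length P + t)) = u ! (length P + t)" by (rule nth)
    have "s < a" using s t by simp
    then have 2: "u ! (length P + t) = True" unfolding d s by (simp add: nth_append)
    show "xword (i + length P + t)" using 1 2 by (simp add: add.assoc)
  qed
  show ?thesis using a1 a2 a3 by blast
qed

lemma G:
  assumes "u \<in> Fact xword"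
    and "u = P @ [False] @ replicate a True @ [False] @ Q"
    and "u = P' @ [False] @ replicate a' True @ [False] @ Q'"
    and "length P < length P'"
  shows "a < a'"
proof -
  obtain i where u0: "u = map (\<lambda>j. xword (i + j)) [0..<length u]"
    using assms(1) unfolding Fact_def by auto
  have u: "\<And>t. t < length u \<Longrightarrow> xword (i + t) = u ! t"
  proof -
    fix t assume "t < length u"
    then have "map (\<lambda>j. xword (i + j)) [0..<length u] ! t = xword (i + t)" by simp
    then show "xword (i + t) = u ! t" using u0 by metis
  qed
  show ?thesis
    using H[OF u assms(2)] H[OF u assms(3)] assms(4)
    by (intro K[of "i + length P" a "i + length P'" a']) (simp_all add: add.assoc)
qed

definition ld :: "bool list \<Rightarrow> nat" where "ld Y = length (takeWhile id Y)"
definition tr :: "bool list \<Rightarrow> nat" where "tr X = length (takeWhile id (rev X))"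

lemma dec_front:
  assumes "False \<in> set Y"
  shows "\<exists>Y1. Y = replicate (ld Y) True @ False # Y1"
proof -
  have 1: "takeWhile id Y = replicate (ld Y) True"
    unfolding ld_def by (rule replicate_eqI) (auto dest: set_takeWhileD)
  have "dropWhile id Y \<noteq> []" using assms by (auto simp: dropWhile_eq_Nil_conv)
  then obtain b Y1 where 2: "dropWhile id Y = b # Y1" by (cases "dropWhile id Y") auto
  have "\<not> id b" using hd_dropWhile[of "id" Y] 2 by (metis list.distinct(1) list.sel(1))
  then have "b = False" by simp
  then show ?thesis using takeWhile_dropWhile_id[of id Y] 1 2 by metis
qed

lemma dec_back:
  assumes "False \<in> set X"
  shows "\<exists>X1. X = X1 @ False # replicate (tr X) True"
proof -
  have "False \<in> set (rev X)" using assms by simp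
  from dec_front[OF this] obtain Y1 where "rev X = replicate (ld (rev X)) True @ False # Y1" by blast
  then have "X = rev Y1 @ False # replicate (ld (rev X)) True"
    by (metis rev_rev_ident rev.simps(2) rev_append rev_replicate append_assoc append_Cons append_Nil)
  then show ?thesis unfolding tr_def ld_def by blast
qed

lemma L:
  assumes "X @ Y @ Z \<in> Fact xword" "False \<in> set X" "False \<in> set Y" "False \<in> set Z"
  shows "tr X + ld Y < tr Y + ld Z"
proof -
  obtain X1 where X: "X = X1 @ False # replicate (tr X) True" using dec_back assms(2) by blast
  obtain Y1 where Y1: "Y = replicate (ld Y) True @ False # Y1" using dec_front assms(3) by blast
  obtain Y2 where Y2: "Y = Y2 @ False # replicate (tr Y) True" using dec_back assms(3) by blast
  obtain Z1 where Z: "Z = replicate (ld Z) True @ False # Z1" using dec_front assms(4) by blast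
  have e1: "X @ Y @ Z = X1 @ [False] @ replicate (tr X + ld Y) True @ [False] @ (Y1 @ Z)"
    apply (subst X, subst Y1) by (simp add: replicate_add)
  have e2: "X @ Y @ Z = (X @ Y2) @ [False] @ replicate (tr Y + ld Z) True @ [False] @ Z1"
    apply (subst Y2, subst Z) by (simp add: replicate_add)
  have "length X1 < length (X @ Y2)" using arg_cong[OF X, of length] by simp
  then show ?thesis using G[OF assms(1) e1 e2] by blast
qed


lemma perm1: "(\<lambda>i::nat. if i = 0 then 1 else if i = 1 then 2 else if i = 2 then 0 else i) permutes {..<3}"
  apply (rule bij_imp_permutes)
   apply (auto simp: bij_betw_def inj_on_def image_def lessThan_def)
  apply (rule_tac x="if x = 0 then 2 else x - 1" in exI)
  apply auto
  done

lemma perm2: "(\<lambda>i::nat. if i = 0 then 2 else if i = 1 then 0 else if i = 2 then 1 else i) permutes {..<3}"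
  apply (rule bij_imp_permutes)
   apply (auto simp: bij_betw_def inj_on_def image_def lessThan_def)
  apply (rule_tac x="if x = 2 then 0 else x + 1" in exI)
  apply auto
  done

lemma upt3: "[0..<3] = [0,1,2::nat]"
  by (simp add: upt_rec)

theorem mainTheorem13:
  shows "\<not> (\<exists>m V. is_factorization (suffix_from xword m) V \<and> ultra_mono phi V)"
proof
  assume "\<exists>m V. is_factorization (suffix_from xword m) V \<and> ultra_mono phi V"
  then obtain m V where fac: "is_factorization (suffix_from xword m) V" and um: "ultra_mono phi V"
    by blast
  define off where "off n = (\<Sum>i<n. length (V i))" for n
  have ne: "\<And>n. V n \<noteq> []" using fac unfolding is_factorization_def by blast
  have eq: "\<And>n j. j < length (V n) \<Longrightarrow> xword (m + (off n + j)) = V n ! j"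
    using fac unfolding is_factorization_def suffix_from_def off_def by blast
  have off_Suc: "off (Suc n) = off n + length (V n)" for n unfolding off_def by simp
  have off_mono: "n \<le> n' \<Longrightarrow> off n \<le> off n'" for n n'
    unfolding off_def by (rule sum_mono2) auto
  have off_ge: "n \<le> off n" for n
  proof (induction n)
    case (Suc n) then show ?case using ne[of n] off_Suc[of n] by (cases "V n") auto
  qed (simp add: off_def)
  from um obtain c where c: "\<And>k ns \<sigma>. k \<ge> 1 \<Longrightarrow> (\<forall>i j. i < j \<longrightarrow> j < k \<longrightarrow> ns i < ns j) \<Longrightarrow>
      \<sigma> permutes {..<k} \<Longrightarrow> phi (concat (map (\<lambda>i. V (ns (\<sigma> i))) [0..<k])) = c"
    unfolding ultra_mono_def by blast
  have VF: "V n \<in> Fact xword" for n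
    unfolding Fact_def
  proof (intro CollectI conjI exI)
    show "V n \<noteq> []" by (rule ne)
    show "V n = map (\<lambda>j. xword (m + off n + j)) [0..<length (V n)]"
      by (rule nth_equalityI) (auto simp: eq add.assoc)
  qed
  have "phi (concat (map (\<lambda>i. V ((\<lambda>_. 0) (id i))) [0..<1])) = c"
    using c[of 1 "\<lambda>_. 0" id] by (simp add: permutes_id)
  then have c0: "c = False" using VF[of 0] by (simp add: phi_def)
  have cyc: "concat (map (\<lambda>i. V (ns (\<sigma> i))) [0..<3]) \<in> Fact xword"
    if "\<forall>i j. i < j \<longrightarrow> j < 3 \<longrightarrow> ns i < ns j" "\<sigma> permutes {..<3}" for ns \<sigma>
    using c[of 3 ns \<sigma>] that c0 by (simp add: phi_def)
  have zeros: "\<exists>n\<ge>N. False \<in> set (V n)" for N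
  proof -
    define t where "t = zz (m + off N) - m"
    have tN: "off N \<le> t" using zz_ge[of "m + off N"] unfolding t_def by simp
    have ex: "\<exists>n. t < off (Suc n)" using off_ge[of "Suc t"] by (intro exI[of _ t]) simp
    define n where "n = (LEAST n. t < off (Suc n))"
    have n1: "t < off (Suc n)" unfolding n_def by (rule LeastI_ex[OF ex])
    have n2: "off n \<le> t"
    proof (cases n)
      case 0 then show ?thesis by (simp add: off_def)
    next
      case (Suc n0)
      have "\<not> t < off (Suc n0)" using Suc n_def not_less_Least by (metis lessI)
      then show ?thesis using Suc by simp
    qed
    have nN: "N \<le> n"
    proof (rule ccontr)
      assume "\<not> N \<le> n"
      then have "off (Suc n) \<le> off N" by (intro off_mono) simp
      then show False using n1 tN by simp
    qed
    define j where "j = t - off n"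
    have j: "j < length (V n)" using n1 n2 off_Suc[of n] unfolding j_def by simp
    have "V n ! j = xword (m + (off n + j))" using eq[OF j] by simp
    also have "m + (off n + j) = zz (m + off N)"
      using n2 zz_ge[of "m + off N"] unfolding j_def t_def by simp
    finally have "V n ! j = False" using notx by metis
    then have "False \<in> set (V n)" using j by (metis nth_mem)
    then show ?thesis using nN by blast
  qed
  obtain a where a: "False \<in> set (V a)" using zeros by blast
  obtain b where b: "b \<ge> Suc a" "False \<in> set (V b)" using zeros by blast
  obtain d where d: "d \<ge> Suc b" "False \<in> set (V d)" using zeros by blast
  define ns where "ns = (\<lambda>i::nat. if i = 0 then a else if i = 1 then b else d)"
  have nsm: "\<forall>i j. i < j \<longrightarrow> j < 3 \<longrightarrow> ns i < ns j"
    using b d unfolding ns_def by auto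
  have f0: "V a @ V b @ V d \<in> Fact xword"
    using cyc[OF nsm permutes_id] by (simp add: upt3 ns_def)
  have f1: "V b @ V d @ V a \<in> Fact xword"
    using cyc[OF nsm perm1] by (simp add: upt3 ns_def)
  have f2: "V d @ V a @ V b \<in> Fact xword"
    using cyc[OF nsm perm2] by (simp add: upt3 ns_def)
  show False using L[OF f0 a b(2) d(2)] L[OF f1 b(2) d(2) a] L[OF f2 d(2) a b(2)] by simp
qed

end
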